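(* Let $\{\theta_m\}$ satisfy $\theta_1\ge\theta_2\ge\cdots\ge0$, $\theta_m\to0$; $\mathcal B=\mathcal B(\{\theta_m\})$; $b_1,b_2>0$. There exists $C_3>0$, depending only on $b_1,b_2$ (besides $N$ and $\{\theta_m\}$), such that for all $m\in\mathbb N$ with $\theta_m\le1$ and every $g\in V$ satisfying (H), writing $g_m=E_mg$, one has $\mathscr L_{g_m}(\mathcal B)\subset\mathcal B$ and $\|\mathscr L_g-\mathscr L_{g_m}\|_{\mathcal B\to\mathcal B}\le C_3\theta_m$.
   Context: $\Sigma_{\mathbf A}^+$ is the one-sided Markov shift of an $N\times N$ zero-one aperiodic matrix $\mathbf A$, $\sigma_{\mathbf A}$ the shift. $\mathrm{var}_k(\phi)=\sup\{|\phi(\omega)-\phi(\omega')|:\omega_j=\omega'_j,\ 0\le j\le k-1\}$; $V=\{\phi:\mathrm{var}_k(\phi)^{1/k}\to0\}$. $(\mathscr L_g\phi)(\omega)=\sum_{\sigma_{\mathbf A}\omega'=\omega}e^{g(\omega')}\phi(\omega')$. $\mathcal B(\{\theta_m\})=\{\phi\in V:\exists C\ge0,\ \mathrm{var}_k(\phi)\le C\theta_{k+1}^k\ \forall k\ge0\}$ with norm $\|\phi\|_\infty+\inf C$. Fix a Borel probability $\mu$ charging all nonempty open sets; $(E_m\phi)(\omega)=\mu([\omega|m])^{-1}\int_{[\omega|m]}\phi\,d\mu$, $[\omega|m]=\{\xi:\xi_j=\omega_j,0\le j\le m-1\}$. Condition (H) on $g\in V$: $e^{\max\mathrm{Re}\,g}\le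 b_1$ and $\mathrm{var}_k(g)\le b_2\theta_k^k$ for all $k\in\mathbb N$. *)

theory Defs
  imports "HOL-Probability.Probability"
begin

text \<open>Alphabet {0..<N}; the zero-one matrix A is a function nat => nat => real.\<close>

fun mpow :: "nat \<Rightarrow> (nat \<Rightarrow> nat \<Rightarrow> real) \<Rightarrow> nat \<Rightarrow> nat \<Rightarrow> nat \<Rightarrow> real" where
  "mpow N A 0 i j = (if i = j then 1 else 0)"
| "mpow N A (Suc p) i j = (\<Sum>k<N. mpow N A p i k * A k j)"

definition zero_one_aperiodic :: "nat \<Rightarrow> (nat \<Rightarrow> nat \<Rightarrow> real) \<Rightarrow> bool" where
  "zero_one_aperiodic N A \<longleftrightarrow>
     (\<forall>i<N. \<forall>j<N. A i j = 0 \<or> A i j = 1) \<and>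
     (\<exists>p>0. \<forall>i<N. \<forall>j<N. mpow N A p i j > 0)"

definition SigmaA :: "nat \<Rightarrow> (nat \<Rightarrow> nat \<Rightarrow> real) \<Rightarrow> (nat \<Rightarrow> nat) set" where
  "SigmaA N A = {\<omega>. \<forall>j. \<omega> j < N \<and> A (\<omega> j) (\<omega> (Suc j)) = 1}"

definition shift :: "(nat \<Rightarrow> nat) \<Rightarrow> (nat \<Rightarrow> nat)" where
  "shift \<omega> = (\<lambda>j. \<omega> (Suc j))"

definition var :: "(nat \<Rightarrow> nat) set \<Rightarrow> nat \<Rightarrow> ((nat \<Rightarrow> nat) \<Rightarrow> complex) \<Rightarrow> real" where
  "var S k \<phi> = Sup {cmod (\<phi> \<omega> - \<phi> \<omega>') | \<omega> \<omega>'.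
      \<omega> \<in> S \<and> \<omega>' \<in> S \<and> (\<forall>j<k. \<omega> j = \<omega>' j)}"

text \<open>The class V (var_k is required to be finite for every k, as implicit in the paper).\<close>
definition Vcl :: "(nat \<Rightarrow> nat) set \<Rightarrow> ((nat \<Rightarrow> nat) \<Rightarrow> complex) set" where
  "Vcl S = {\<phi>. (\<forall>k. bdd_above {cmod (\<phi> \<omega> - \<phi> \<omega>') | \<omega> \<omega>'.
                      \<omega> \<in> S \<and> \<omega>' \<in> S \<and> (\<forall>j<k. \<omega> j = \<omega>' j)}) \<and>
              (\<lambda>k. root k (var S k \<phi>)) \<longlonglongrightarrow> 0}"

definition ruelle :: "(nat \<Rightarrow> nat) set \<Rightarrow> ((nat \<Rightarrow> nat) \<Rightarrow> complex) \<Rightarrow>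
    ((nat \<Rightarrow> nat) \<Rightarrow> complex) \<Rightarrow> ((nat \<Rightarrow> nat) \<Rightarrow> complex)" where
  "ruelle S g \<phi> = (\<lambda>\<omega>. \<Sum>\<omega>'\<in>{\<omega>'\<in>S. shift \<omega>' = \<omega>}. exp (g \<omega>') * \<phi> \<omega>')"

text \<open>The Banach space B({theta_m}); theta is indexed from 1 (theta 0 unused).\<close>
definition Bsp :: "(nat \<Rightarrow> nat) set \<Rightarrow> (nat \<Rightarrow> real) \<Rightarrow> ((nat \<Rightarrow> nat) \<Rightarrow> complex) set" where
  "Bsp S \<theta> = {\<phi> \<in> Vcl S. \<exists>C\<ge>0. \<forall>k. var S k \<phi> \<le> C * \<theta> (k+1) ^ k}"

definition supnorm :: "(nat \<Rightarrow> nat) set \<Rightarrow> ((nat \<Rightarrow> nat) \<Rightarrow> complex) \<Rightarrow> real" where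
  "supnorm S \<phi> = Sup ((\<lambda>\<omega>. cmod (\<phi> \<omega>)) ` S)"

definition Bnorm :: "(nat \<Rightarrow> nat) set \<Rightarrow> (nat \<Rightarrow> real) \<Rightarrow> ((nat \<Rightarrow> nat) \<Rightarrow> complex) \<Rightarrow> real" where
  "Bnorm S \<theta> \<phi> = supnorm S \<phi> + Inf {C. C \<ge> 0 \<and> (\<forall>k. var S k \<phi> \<le> C * \<theta> (k+1) ^ k)}"

definition cyl :: "(nat \<Rightarrow> nat) set \<Rightarrow> (nat \<Rightarrow> nat) \<Rightarrow> nat \<Rightarrow> (nat \<Rightarrow> nat) set" where
  "cyl S \<omega> m = {\<xi> \<in> S. \<forall>j<m. \<xi> j = \<omega> j}"

definition condE :: "(nat \<Rightarrow> nat) measure \<Rightarrow> (nat \<Rightarrow> nat) set \<Rightarrow> nat \<Rightarrow>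
    ((nat \<Rightarrow> nat) \<Rightarrow> complex) \<Rightarrow> ((nat \<Rightarrow> nat) \<Rightarrow> complex)" where
  "condE \<mu> S m \<phi> = (\<lambda>\<omega>. (LINT \<xi>:cyl S \<omega> m|\<mu>. \<phi> \<xi>) / complex_of_real (measure \<mu> (cyl S \<omega> m)))"

definition admissible_measure :: "(nat \<Rightarrow> nat) set \<Rightarrow> (nat \<Rightarrow> nat) measure \<Rightarrow> bool" where
  "admissible_measure S \<mu> \<longleftrightarrow> prob_space \<mu> \<and> sets \<mu> = sets (restrict_space borel S) \<and>
     (\<forall>U. openin (top_of_set S) U \<and> U \<noteq> {} \<longrightarrow> measure \<mu> U > 0)"

definition condH :: "(nat \<Rightarrow> nat) set \<Rightarrow> (nat \<Rightarrow> real) \<Rightarrow> real \<Rightarrow> real \<Rightarrow> ((nat \<Rightarrow> nat) \<Rightarrow> complex) \<Rightarrow> bool" where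
  "condH S \<theta> b1 b2 g \<longleftrightarrow> (\<forall>\<omega>\<in>S. exp (Re (g \<omega>)) \<le> b1) \<and>
     (\<forall>k\<ge>1. var S k g \<le> b2 * \<theta> k ^ k)"

end

theory Submission
  imports Defs
begin


lemma var_upper:
  assumes "\<phi> \<in> Vcl S" "\<omega> \<in> S" "\<xi> \<in> S" "\<forall>j<k. \<omega> j = \<xi> j"
  shows "cmod (\<phi> \<omega> - \<phi> \<xi>) \<le> var S k \<phi>"
proof -
  have "bdd_above {cmod (\<phi> \<omega> - \<phi> \<omega>') | \<omega> \<omega>'. \<omega> \<in> S \<and> \<omega>' \<in> S \<and> (\<forall>j<k. \<omega> j = \<omega>' j)}"
    using assms(1) unfolding Vcl_def by auto
  then show ?thesis unfolding var_def by (rule cSup_upper[rotated]) (use assms in blast)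
qed

lemma var_least:
  assumes "S \<noteq> {}" "\<And>\<omega> \<xi>. \<omega> \<in> S \<Longrightarrow> \<xi> \<in> S \<Longrightarrow> \<forall>j<k. \<omega> j = \<xi> j \<Longrightarrow> cmod (\<phi> \<omega> - \<phi> \<xi>) \<le> M"
  shows "var S k \<phi> \<le> M"
  unfolding var_def
  apply (rule cSup_least)
  using assms by auto

lemma Vcl_bound:
  assumes "\<phi> \<in> Vcl S" "x0 \<in> S" "\<xi> \<in> S"
  shows "cmod (\<phi> \<xi>) \<le> cmod (\<phi> x0) + var S 0 \<phi>"
proof -
  have "cmod (\<phi> \<xi> - \<phi> x0) \<le> var S 0 \<phi>" using var_upper[OF assms(1,3,2), of 0] by simp
  then show ?thesis using norm_triangle_ineq2[of "\<phi> \<xi>" "\<phi> x0"] by linarith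
qed

lemma supnorm_upper:
  assumes "\<phi> \<in> Vcl S" "\<xi> \<in> S"
  shows "cmod (\<phi> \<xi>) \<le> supnorm S \<phi>"
  unfolding supnorm_def
  apply (rule cSUP_upper[OF assms(2)])
  apply (rule bdd_aboveI2[where M="cmod (\<phi> \<xi>) + var S 0 \<phi>"])
  using Vcl_bound[OF assms(1,2)] by auto

lemma supnorm_least:
  assumes "S \<noteq> {}" "\<forall>\<xi>\<in>S. cmod (f \<xi>) \<le> M"
  shows "supnorm S f \<le> M"
  unfolding supnorm_def using assms by (intro cSUP_least) auto

lemma good_Bsp:
  fixes \<theta> :: "nat \<Rightarrow> real"
  assumes S: "S \<noteq> {}" and th: "\<theta> \<longlonglongrightarrow> 0" and thn: "\<forall>k\<ge>1. \<theta> k \<ge> 0" and C: "C \<ge> 0"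
    and b: "\<And>k \<omega> \<xi>. \<omega> \<in> S \<Longrightarrow> \<xi> \<in> S \<Longrightarrow> \<forall>j<k. \<omega> j = \<xi> j \<Longrightarrow> cmod (f \<omega> - f \<xi>) \<le> C * \<theta> (k+1) ^ k"
  shows "f \<in> Bsp S \<theta> \<and> (\<forall>k. var S k f \<le> C * \<theta> (k+1) ^ k)"
proof -
  have vb: "var S k f \<le> C * \<theta> (k+1) ^ k" for k by (rule var_least[OF S]) (rule b)
  have bdd: "bdd_above {cmod (f \<omega> - f \<omega>') | \<omega> \<omega>'. \<omega> \<in> S \<and> \<omega>' \<in> S \<and> (\<forall>j<k. \<omega> j = \<omega>' j)}" for k
    by (rule bdd_aboveI[where M="C * \<theta> (k+1) ^ k"]) (use b in auto)
  obtain s where s: "s \<in> S" using S by auto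
  have vnn: "0 \<le> var S k f" for k
  proof -
    have "cmod (f s - f s) \<le> var S k f" unfolding var_def
      by (rule cSup_upper) (use bdd s in auto)
    then show ?thesis by simp
  qed
  have thnn: "0 \<le> \<theta> (k+1)" for k using thn by auto
  have lim: "(\<lambda>k. root k (var S k f)) \<longlonglongrightarrow> 0"
  proof (rule real_tendsto_sandwich[where f="\<lambda>_. 0" and h="\<lambda>k. root k (C+1) * \<theta> (k+1)"])
    show "\<forall>\<^sub>F n in sequentially. 0 \<le> root n (var S n f)"
      using vnn by (simp add: real_root_ge_zero)
    show "\<forall>\<^sub>F n in sequentially. root n (var S n f) \<le> root n (C + 1) * \<theta> (n + 1)"
    proof (rule eventually_sequentiallyI[of 1])
      fix n :: nat assume n: "1 \<le> n"
      have "var S n f \<le> (C+1) * \<theta> (n+1) ^ n"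
        using vb[of n] thnn[of n] by (smt (verit) mult_right_mono zero_le_power)
      then have "root n (var S n f) \<le> root n ((C+1) * \<theta> (n+1) ^ n)"
        using n by (intro real_root_le_mono) auto
      also have "\<dots> = root n (C+1) * \<theta> (n+1)"
        using n thnn[of n] by (simp add: real_root_mult real_root_power_cancel)
      finally show "root n (var S n f) \<le> root n (C + 1) * \<theta> (n + 1)" .
    qed
    show "(\<lambda>_. 0) \<longlonglongrightarrow> (0::real)" by simp
    have "(\<lambda>k. root k (C+1) * \<theta> (k+1)) \<longlonglongrightarrow> 1 * 0"
      by (intro tendsto_mult LIMSEQ_root_const) (use C th LIMSEQ_Suc[OF th] in auto)
    then show "(\<lambda>k. root k (C+1) * \<theta> (k+1)) \<longlonglongrightarrow> 0" by simp
  qed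
  show ?thesis unfolding Bsp_def Vcl_def using bdd lim vb C by auto
qed

lemma Bsp_good:
  assumes "\<phi> \<in> Vcl S" "\<forall>k. var S k \<phi> \<le> C * \<theta> (k+1) ^ k"
    "\<omega> \<in> S" "\<xi> \<in> S" "\<forall>j<k. \<omega> j = \<xi> j"
  shows "cmod (\<phi> \<omega> - \<phi> \<xi>) \<le> C * \<theta> (k+1) ^ k"
  using var_upper[OF assms(1,3,4,5)] assms(2) by (meson order.trans)



definition Lw :: "(nat \<Rightarrow> nat) set \<Rightarrow> ((nat \<Rightarrow> nat) \<Rightarrow> complex) \<Rightarrow> ((nat \<Rightarrow> nat) \<Rightarrow> complex) \<Rightarrow> (nat \<Rightarrow> nat) \<Rightarrow> complex" where
  "Lw S w \<phi> = (\<lambda>\<omega>. \<Sum>\<omega>'\<in>{\<omega>'\<in>S. shift \<omega>' = \<omega>}. w \<omega>' * \<phi> \<omega>')"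

lemma ruelle_Lw: "ruelle S g \<phi> = Lw S (\<lambda>x. exp (g x)) \<phi>"
  unfolding ruelle_def Lw_def by simp

lemma Lw_diff: "(\<lambda>\<omega>. Lw S w1 \<phi> \<omega> - Lw S w2 \<phi> \<omega>) = Lw S (\<lambda>x. w1 x - w2 x) \<phi>"
  unfolding Lw_def by (simp add: sum_subtractf[symmetric] left_diff_distrib)

lemma cons_in:
  assumes "\<omega> \<in> SigmaA N A" "a < N" "A a (\<omega> 0) = 1"
  shows "case_nat a \<omega> \<in> SigmaA N A"
  using assms unfolding SigmaA_def
  by (auto split: nat.split)

lemma preimg:
  assumes "\<omega> \<in> SigmaA N A"
  shows "{\<omega>'\<in>SigmaA N A. shift \<omega>' = \<omega>} = (\<lambda>a. case_nat a \<omega>) ` {a. a < N \<and> A a (\<omega> 0) = 1}"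
proof (intro set_eqI iffI)
  fix x assume x: "x \<in> {\<omega>'\<in>SigmaA N A. shift \<omega>' = \<omega>}"
  then have xe: "x = case_nat (x 0) \<omega>"
    by (auto simp: shift_def fun_eq_iff split: nat.split)
  have "x 0 < N" "A (x 0) (x 1) = 1" using x unfolding SigmaA_def by auto
  moreover have "x 1 = \<omega> 0" using x by (auto simp: shift_def)
  ultimately show "x \<in> (\<lambda>a. case_nat a \<omega>) ` {a. a < N \<and> A a (\<omega> 0) = 1}"
    using xe by (intro image_eqI[where x="x 0"]) auto
next
  fix x assume "x \<in> (\<lambda>a. case_nat a \<omega>) ` {a. a < N \<and> A a (\<omega> 0) = 1}"
  then obtain a where "a < N" "A a (\<omega> 0) = 1" "x = case_nat a \<omega>" by auto
  then show "x \<in> {\<omega>'\<in>SigmaA N A. shift \<omega>' = \<omega>}"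
    using cons_in[OF assms] by (auto simp: shift_def)
qed

lemma Lw_eq:
  assumes "\<omega> \<in> SigmaA N A"
  shows "Lw (SigmaA N A) w \<phi> \<omega> = (\<Sum>a\<in>{a. a < N \<and> A a (\<omega> 0) = 1}. w (case_nat a \<omega>) * \<phi> (case_nat a \<omega>))"
proof -
  have inj: "inj_on (\<lambda>a. case_nat a \<omega>) {a. a < N \<and> A a (\<omega> 0) = 1}"
    by (rule inj_onI) (metis old.nat.simps(4))
  show ?thesis unfolding Lw_def preimg[OF assms]
    by (subst sum.reindex[OF inj]) simp
qed

lemma card_idx: "card {a. a < N \<and> A a c = 1} \<le> N"
  by (rule order.trans[OF card_mono[of "{..<N}"]]) auto

lemma Lw_sup:
  assumes "\<forall>x\<in>SigmaA N A. cmod (w x) \<le> W" "\<forall>x\<in>SigmaA N A. cmod (\<phi> x) \<le> P"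
    "W \<ge> 0" "P \<ge> 0" "\<omega> \<in> SigmaA N A"
  shows "cmod (Lw (SigmaA N A) w \<phi> \<omega>) \<le> N * W * P"
proof -
  let ?I = "{a. a < N \<and> A a (\<omega> 0) = 1}"
  have "cmod (Lw (SigmaA N A) w \<phi> \<omega>) \<le> (\<Sum>a\<in>?I. cmod (w (case_nat a \<omega>) * \<phi> (case_nat a \<omega>)))"
    unfolding Lw_eq[OF assms(5)] by (rule norm_sum)
  also have "\<dots> \<le> of_nat (card ?I) * (W * P)"
  proof (rule sum_bounded_above)
    fix a assume "a \<in> ?I"
    then have "case_nat a \<omega> \<in> SigmaA N A" using cons_in[OF assms(5)] by auto
    then show "cmod (w (case_nat a \<omega>) * \<phi> (case_nat a \<omega>)) \<le> W * P"
      unfolding norm_mult using assms by (intro mult_mono) auto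
  qed
  also have "\<dots> \<le> N * (W * P)"
    using card_idx assms(3,4) by (intro mult_right_mono) auto
  finally show ?thesis by simp
qed

lemma Lw_var:
  assumes "\<forall>x\<in>SigmaA N A. cmod (w x) \<le> W" "\<forall>x\<in>SigmaA N A. cmod (\<phi> x) \<le> P"
    "W \<ge> 0" "P \<ge> 0" "Uw \<ge> 0" "Up \<ge> 0"
    "\<And>x y. x \<in> SigmaA N A \<Longrightarrow> y \<in> SigmaA N A \<Longrightarrow> \<forall>j<Suc k. x j = y j \<Longrightarrow> cmod (w x - w y) \<le> Uw"
    "\<And>x y. x \<in> SigmaA N A \<Longrightarrow> y \<in> SigmaA N A \<Longrightarrow> \<forall>j<Suc k. x j = y j \<Longrightarrow> cmod (\<phi> x - \<phi> y) \<le> Up"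
    "k \<ge> 1" "\<omega> \<in> SigmaA N A" "\<xi> \<in> SigmaA N A" "\<forall>j<k. \<omega> j = \<xi> j"
  shows "cmod (Lw (SigmaA N A) w \<phi> \<omega> - Lw (SigmaA N A) w \<phi> \<xi>) \<le> N * (W * Up + P * Uw)"
proof -
  let ?I = "{a. a < N \<and> A a (\<omega> 0) = 1}"
  have e0: "\<xi> 0 = \<omega> 0" using assms(9,12) by auto
  have "Lw (SigmaA N A) w \<phi> \<omega> - Lw (SigmaA N A) w \<phi> \<xi> =
    (\<Sum>a\<in>?I. w (case_nat a \<omega>) * \<phi> (case_nat a \<omega>) - w (case_nat a \<xi>) * \<phi> (case_nat a \<xi>))"
    unfolding Lw_eq[OF assms(10)] Lw_eq[OF assms(11)] e0 by (simp add: sum_subtractf)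
  then have "cmod (Lw (SigmaA N A) w \<phi> \<omega> - Lw (SigmaA N A) w \<phi> \<xi>) \<le>
    (\<Sum>a\<in>?I. cmod (w (case_nat a \<omega>) * \<phi> (case_nat a \<omega>) - w (case_nat a \<xi>) * \<phi> (case_nat a \<xi>)))"
    by (simp add: norm_sum)
  also have "\<dots> \<le> of_nat (card ?I) * (W * Up + P * Uw)"
  proof (rule sum_bounded_above)
    fix a assume a: "a \<in> ?I"
    define x where "x = case_nat a \<omega>"
    define y where "y = case_nat a \<xi>"
    have x: "x \<in> SigmaA N A" using cons_in[OF assms(10)] a x_def by auto
    have y: "y \<in> SigmaA N A" using cons_in[OF assms(11)] a y_def e0 by auto
    have xy: "\<forall>j<Suc k. x j = y j" using assms(12) unfolding x_def y_def
      by (auto split: nat.split)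
    have "w x * \<phi> x - w y * \<phi> y = w x * (\<phi> x - \<phi> y) + \<phi> y * (w x - w y)"
      by (simp add: algebra_simps)
    then have "cmod (w x * \<phi> x - w y * \<phi> y) \<le> cmod (w x) * cmod (\<phi> x - \<phi> y) + cmod (\<phi> y) * cmod (w x - w y)"
      by (metis norm_mult norm_triangle_ineq)
    also have "\<dots> \<le> W * Up + P * Uw"
      using assms(1,2,3,4) assms(7)[OF x y xy] assms(8)[OF x y xy] x y
      by (intro add_mono mult_mono) auto
    finally show "cmod (w (case_nat a \<omega>) * \<phi> (case_nat a \<omega>) - w (case_nat a \<xi>) * \<phi> (case_nat a \<xi>)) \<le> W * Up + P * Uw"
      unfolding x_def y_def .
  qed
  also have "\<dots> \<le> N * (W * Up + P * Uw)"
    using card_idx assms(3-6) by (intro mult_right_mono) auto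
  finally show ?thesis .
qed



lemma open_cylset: "open {\<xi>::nat\<Rightarrow>nat. \<forall>j<k. \<xi> j = c j}"
proof -
  have eq: "{\<xi>::nat\<Rightarrow>nat. \<forall>j<k. \<xi> j = c j} = (\<Inter>j\<in>{..<k}. (\<lambda>\<xi>. \<xi> j) -` {c j})" by auto
  have "open ((\<lambda>\<xi>::nat\<Rightarrow>nat. \<xi> j) -` {c j})" for j
  proof -
    have "continuous_on UNIV (\<lambda>\<xi>::nat\<Rightarrow>nat. \<xi> j)" by simp
    then have "open ((\<lambda>\<xi>::nat\<Rightarrow>nat. \<xi> j) -` {c j} \<inter> UNIV)"
      using continuous_on_open_vimage[OF open_UNIV] Topological_Spaces.open_discrete by blast
    then show ?thesis by simp
  qed
  then show ?thesis unfolding eq by (intro open_INT) auto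
qed

lemma cont_from_var:
  assumes "\<And>e. e > 0 \<Longrightarrow> \<exists>k. \<forall>\<omega>\<in>S. \<forall>\<xi>\<in>S. (\<forall>j<k. \<omega> j = \<xi> j) \<longrightarrow> cmod (g \<omega> - g \<xi>) < e"
  shows "continuous_on S (g :: (nat\<Rightarrow>nat) \<Rightarrow> complex)"
  unfolding continuous_on_topological
proof (intro ballI allI impI)
  fix x B assume x: "x \<in> S" and B: "open B" "g x \<in> B"
  obtain e where e: "e > 0" "ball (g x) e \<subseteq> B" using B open_contains_ball by blast
  obtain k where k: "\<forall>\<omega>\<in>S. \<forall>\<xi>\<in>S. (\<forall>j<k. \<omega> j = \<xi> j) \<longrightarrow> cmod (g \<omega> - g \<xi>) < e"
    using assms[OF e(1)] by blast
  show "\<exists>A. open A \<and> x \<in> A \<and> (\<forall>y\<in>S. y \<in> A \<longrightarrow> g y \<in> B)"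
  proof (intro exI[of _ "{\<xi>. \<forall>j<k. \<xi> j = x j}"] conjI ballI impI)
    show "open {\<xi>. \<forall>j<k. \<xi> j = x j}" by (rule open_cylset)
    show "x \<in> {\<xi>. \<forall>j<k. \<xi> j = x j}" by simp
    fix y assume "y \<in> S" "y \<in> {\<xi>. \<forall>j<k. \<xi> j = x j}"
    then have "cmod (g x - g y) < e" using k x by auto
    then show "g y \<in> B" using e(2) by (auto simp: dist_norm)
  qed
qed

lemma condE_close:
  assumes P: "prob_space \<mu>" and sets: "sets \<mu> = sets (restrict_space borel S)" and w: "\<omega> \<in> S"
    and Cs: "cyl S \<omega> m \<in> sets \<mu>" and pos: "measure \<mu> (cyl S \<omega> m) > 0"
    and gm: "g \<in> borel_measurable \<mu>" and gb: "\<forall>x\<in>S. cmod (g x) \<le> B"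
    and V: "\<forall>\<xi>\<in>cyl S \<omega> m. cmod (g \<xi> - g \<omega>) \<le> V"
  shows "cmod (condE \<mu> S m g \<omega> - g \<omega>) \<le> V"
proof -
  interpret prob_space \<mu> by (rule P)
  have sp: "space \<mu> = S" using sets_eq_imp_space_eq[OF sets] by (simp add: space_restrict_space)
  define C where "C = cyl S \<omega> m"
  define c where "c = measure \<mu> C"
  have B0: "B \<ge> 0" using gb w by (meson norm_ge_zero order.trans)
  have Cs': "C \<in> sets \<mu>" using Cs C_def by simp
  have mfin: "emeasure \<mu> C \<noteq> \<infinity>" by simp
  have int: "set_integrable \<mu> C g" unfolding set_integrable_def
  proof (rule integrable_const_bound[where B=B])
    show "AE x in \<mu>. norm (indicator C x *\<^sub>R g x) \<le> B"
      using gb B0 sp by (intro AE_I2) (auto simp: indicator_def)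
    show "(\<lambda>x. indicator C x *\<^sub>R g x) \<in> borel_measurable \<mu>"
      using gm Cs' by measurable
  qed
  have intc: "set_integrable \<mu> C (\<lambda>_. g \<omega>)" unfolding set_integrable_def
  proof (rule integrable_const_bound[where B="cmod (g \<omega>)"])
    show "AE x in \<mu>. norm (indicator C x *\<^sub>R g \<omega>) \<le> cmod (g \<omega>)"
      by (intro AE_I2) (auto simp: indicator_def)
    show "(\<lambda>x. indicator C x *\<^sub>R g \<omega>) \<in> borel_measurable \<mu>"
      using Cs' by measurable
  qed
  have intd: "set_integrable \<mu> C (\<lambda>x. g x - g \<omega>)" using int intc by auto
  define I1 where "I1 = (LINT x:C|\<mu>. g x - g \<omega>)"
  have split: "(LINT x:C|\<mu>. g x) = I1 + c *\<^sub>R g \<omega>"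
    unfolding I1_def c_def using set_integral_diff(2)[OF int intc] set_integral_const[OF Cs' mfin, of "g \<omega>"]
    by simp
  have "norm I1 \<le> (LINT x:C|\<mu>. norm (g x - g \<omega>))"
    unfolding I1_def by (rule set_integral_norm_bound[OF intd])
  also have "\<dots> \<le> (LINT x:C|\<mu>. V)"
  proof (rule set_integral_mono)
    show "set_integrable \<mu> C (\<lambda>x. norm (g x - g \<omega>))" by (rule set_integrable_norm[OF intd])
    show "set_integrable \<mu> C (\<lambda>x. V)" unfolding set_integrable_def
      by (rule integrable_const_bound[where B="\<bar>V\<bar>"]) (use Cs' in \<open>auto simp: indicator_def\<close>)
    show "\<And>x. x \<in> C \<Longrightarrow> norm (g x - g \<omega>) \<le> V" using V C_def by auto
  qed
  also have "\<dots> = c * V" unfolding c_def using set_integral_const[OF Cs' mfin, of V] by simp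
  finally have nI: "norm I1 \<le> c * V" .
  have cpos: "c > 0" using pos C_def c_def by simp
  have "condE \<mu> S m g \<omega> - g \<omega> = I1 / complex_of_real c"
    unfolding condE_def C_def[symmetric] c_def[symmetric] split using cpos
    by (simp add: field_simps scaleR_conv_of_real)
  then have "cmod (condE \<mu> S m g \<omega> - g \<omega>) = norm I1 / c" using cpos by (simp add: norm_divide)
  also have "\<dots> \<le> V" using nI cpos by (simp add: divide_le_eq mult.commute)
  finally show ?thesis .
qed



lemma exp_diff_bound:
  fixes a b :: complex
  shows "cmod (exp a - exp b) \<le> cmod (exp b) * (exp (cmod (a - b)) * cmod (a - b))"
proof -
  have e: "exp a - exp b = exp b * (exp (a - b) - 1)"
    by (simp add: algebra_simps exp_diff)
  have "cmod (exp (a - b) - 1) \<le> exp (cmod (a - b)) * cmod (a - b)"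
    using Taylor_exp_field[of "a - b" 0] by simp
  then show ?thesis unfolding e norm_mult
    by (intro mult_left_mono) auto
qed

lemma pow_le_self: "0 \<le> (x::real) \<Longrightarrow> x \<le> 1 \<Longrightarrow> 1 \<le> k \<Longrightarrow> x ^ k \<le> x"
  using power_decreasing[of 1 k x] by simp

lemma theta_mono:
  assumes "\<forall>m\<ge>1. \<theta> (Suc m) \<le> (\<theta> m :: real)" "1 \<le> a" "a \<le> b"
  shows "\<theta> b \<le> \<theta> a"
  using assms(3)
proof (induction rule: dec_induct)
  case base then show ?case by simp
next
  case (step n) then show ?case using assms(1,2) by (meson order.trans order_trans)
qed



theorem lemma3p7:
  fixes N :: nat and A :: "nat \<Rightarrow> nat \<Rightarrow> real" and \<theta> :: "nat \<Rightarrow> real" and b1 b2 :: real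
  assumes "zero_one_aperiodic N A"
    and "\<forall>m\<ge>1. \<theta> (Suc m) \<le> \<theta> m" and "\<forall>m\<ge>1. \<theta> m \<ge> 0" and "\<theta> \<longlonglongrightarrow> 0"
    and "b1 > 0" and "b2 > 0"
  shows "\<exists>C3>0. \<forall>\<mu> m g. admissible_measure (SigmaA N A) \<mu> \<and> m \<ge> 1 \<and> \<theta> m \<le> 1 \<and>
           g \<in> Vcl (SigmaA N A) \<and> condH (SigmaA N A) \<theta> b1 b2 g \<longrightarrow>
           (\<forall>\<phi>\<in>Bsp (SigmaA N A) \<theta>.
              ruelle (SigmaA N A) (condE \<mu> (SigmaA N A) m g) \<phi> \<in> Bsp (SigmaA N A) \<theta> \<and>
              (\<lambda>\<omega>. ruelle (SigmaA N A) g \<phi> \<omega> - ruelle (SigmaA N A) (condE \<mu> (SigmaA N A) m g) \<phi> \<omega>)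
                \<in> Bsp (SigmaA N A) \<theta> \<and>
              Bnorm (SigmaA N A) \<theta>
                (\<lambda>\<omega>. ruelle (SigmaA N A) g \<phi> \<omega> - ruelle (SigmaA N A) (condE \<mu> (SigmaA N A) m g) \<phi> \<omega>)
                \<le> C3 * \<theta> m * Bnorm (SigmaA N A) \<theta> \<phi>)"
proof -
  note thdec = assms(2) and thnn = assms(3) and thlim = assms(4) and b1 = assms(5) and b2 = assms(6)
  define S where "S = SigmaA N A"
  define T where "T = max 1 (\<theta> 1)"
  define E where "E = exp b2"
  define E1 where "E1 = exp (b2 * T)"
  define K where "K = real N * b1 * b2 * E * (T + 2)"
  define K1 where "K1 = real N * b1 * b2 * E"
  define K2 where "K2 = real N * b1 * (T + 2) * (1 + E1 * b2)"
  define C3 where "C3 = K + K1 + 1"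
  have mono: "\<And>a b. 1 \<le> a \<Longrightarrow> a \<le> b \<Longrightarrow> \<theta> b \<le> \<theta> a" using theta_mono[OF thdec] by blast
  have nn: "\<And>a. 1 \<le> a \<Longrightarrow> 0 \<le> \<theta> a" using thnn by blast
  have T1: "T \<ge> 1" unfolding T_def by simp
  have leT: "\<And>a. 1 \<le> a \<Longrightarrow> \<theta> a \<le> T" using mono[of 1] unfolding T_def by force
  have E0: "E > 0" "E1 > 0" unfolding E_def E1_def by auto
  have K0: "K \<ge> 0" "K1 \<ge> 0" "K2 \<ge> 0" unfolding K_def K1_def K2_def using b1 b2 E0 T1 by auto
  have C3pos: "C3 > 0" unfolding C3_def using K0 by simp
  have main: "ruelle S (condE \<mu> S m g) \<phi> \<in> Bsp S \<theta> \<and>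
              (\<lambda>\<omega>. ruelle S g \<phi> \<omega> - ruelle S (condE \<mu> S m g) \<phi> \<omega>) \<in> Bsp S \<theta> \<and>
              Bnorm S \<theta> (\<lambda>\<omega>. ruelle S g \<phi> \<omega> - ruelle S (condE \<mu> S m g) \<phi> \<omega>)
                \<le> C3 * \<theta> m * Bnorm S \<theta> \<phi>"
    if adm: "admissible_measure S \<mu>" and m1: "m \<ge> 1" and thm1: "\<theta> m \<le> 1"
      and gV: "g \<in> Vcl S" and gH: "condH S \<theta> b1 b2 g" and \<phi>B: "\<phi> \<in> Bsp S \<theta>" for \<mu> m g \<phi>
  proof -
    have P: "prob_space \<mu>" and sets: "sets \<mu> = sets (restrict_space borel S)"
      and opos: "\<And>U. openin (top_of_set S) U \<Longrightarrow> U \<noteq> {} \<Longrightarrow> measure \<mu> U > 0"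
      using adm unfolding admissible_measure_def by auto
    have sp: "space \<mu> = S" using sets_eq_imp_space_eq[OF sets] by (simp add: space_restrict_space)
    have Sne: "S \<noteq> {}" using prob_space.not_empty[OF P] sp by simp
    have gb1: "\<And>x. x \<in> S \<Longrightarrow> cmod (exp (g x)) \<le> b1" using gH unfolding condH_def by simp
    have gpt: "\<And>k x y. 1 \<le> k \<Longrightarrow> x \<in> S \<Longrightarrow> y \<in> S \<Longrightarrow> \<forall>j<k. x j = y j \<Longrightarrow> cmod (g x - g y) \<le> b2 * \<theta> k ^ k"
      using var_upper[OF gV] gH unfolding condH_def by (meson order.trans)
    have thm0: "0 \<le> \<theta> m" using nn m1 .
    have thmm: "\<theta> m ^ m \<le> \<theta> m" using pow_le_self[OF thm0 thm1 m1] .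
    have gcont: "continuous_on S g"
    proof (rule cont_from_var)
      fix e :: real assume e: "e > 0"
      define d where "d = min 1 (e / b2)"
      have d: "d > 0" using e b2 unfolding d_def by auto
      obtain n0 where n0: "\<And>n. n \<ge> n0 \<Longrightarrow> \<theta> n < d"
        using order_tendstoD(2)[OF thlim d] unfolding eventually_sequentially by blast
      define k where "k = Suc n0"
      have k1: "1 \<le> k" and kd: "\<theta> k < d" using n0[of k] unfolding k_def by auto
      have "\<theta> k ^ k \<le> \<theta> k" using pow_le_self[OF nn[OF k1] _ k1] kd unfolding d_def by auto
      then have "b2 * \<theta> k ^ k < e"
        using kd b2 unfolding d_def by (smt (verit) less_divide_eq mult_left_mono mult.commute)
      then show "\<exists>k. \<forall>\<omega>\<in>S. \<forall>\<xi>\<in>S. (\<forall>j<k. \<omega> j = \<xi> j) \<longrightarrow> cmod (g \<omega> - g \<xi>) < e"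
        using gpt[OF k1] by (meson le_less_trans)
    qed
    have gmeas: "g \<in> borel_measurable \<mu>"
      using borel_measurable_continuous_on_restrict[OF gcont] measurable_cong_sets[OF sets, of "borel :: complex measure" "borel :: complex measure"] by simp
    define gm where "gm = condE \<mu> S m g"
    have cyl_eq: "\<And>\<omega>. cyl S \<omega> m = S \<inter> {\<xi>. \<forall>j<m. \<xi> j = \<omega> j}" unfolding cyl_def by auto
    have F1: "cmod (gm \<omega> - g \<omega>) \<le> b2 * \<theta> m ^ m" if w: "\<omega> \<in> S" for \<omega>
      unfolding gm_def
    proof (rule condE_close[OF P sets w _ _ gmeas])
      show "cyl S \<omega> m \<in> sets \<mu>" unfolding sets sets_restrict_space cyl_eq
        using open_cylset borel_open by blast
      show "measure \<mu> (cyl S \<omega> m) > 0" unfolding cyl_eq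
        by (rule opos) (use open_cylset w in auto)
      show "\<forall>x\<in>S. cmod (g x) \<le> supnorm S g" using supnorm_upper[OF gV] by blast
      show "\<forall>\<xi>\<in>cyl S \<omega> m. cmod (g \<xi> - g \<omega>) \<le> b2 * \<theta> m ^ m"
        using gpt[OF m1] w unfolding cyl_def by auto
    qed
    have zb: "cmod (gm x - g x) \<le> b2" if "x \<in> S" for x
    proof -
      have "b2 * \<theta> m ^ m \<le> b2 * 1" using thmm thm1 b2 by (intro mult_left_mono) auto
      then show ?thesis using F1[OF that] by simp
    qed
    define w where "w = (\<lambda>x. exp (g x) - exp (gm x))"
    define W where "W = b1 * E * b2 * \<theta> m"
    have wsup0: "cmod (w x) \<le> b1 * E * (b2 * \<theta> m ^ m)" if x: "x \<in> S" for x
    proof -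
      have "cmod (w x) = cmod (exp (gm x) - exp (g x))" unfolding w_def by (simp add: norm_minus_commute)
      also have "\<dots> \<le> cmod (exp (g x)) * (exp (cmod (gm x - g x)) * cmod (gm x - g x))"
        by (rule exp_diff_bound)
      also have "\<dots> \<le> b1 * (E * (b2 * \<theta> m ^ m))"
        using gb1[OF x] zb[OF x] F1[OF x] b1 E0 unfolding E_def
        by (intro mult_mono) auto
      finally show ?thesis by simp
    qed
    have W0: "W \<ge> 0" unfolding W_def using b1 b2 E0 thm0 by auto
    have wsup: "\<forall>x\<in>S. cmod (w x) \<le> W"
    proof
      fix x assume x: "x \<in> S"
      have "b1 * E * (b2 * \<theta> m ^ m) \<le> b1 * E * (b2 * \<theta> m)"
        using thmm b1 b2 E0 by (intro mult_left_mono) auto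
      then show "cmod (w x) \<le> W" using wsup0[OF x] unfolding W_def by simp
    qed
    have wvar: "cmod (w x - w y) \<le> 2 * b1 * b2 * E * \<theta> m * \<theta> j ^ (j - 1)"
      if j1: "1 \<le> j" and x: "x \<in> S" and y: "y \<in> S" and xy: "\<forall>i<j. x i = y i" for j x y
    proof (cases "m \<le> j")
      case True
      have "cyl S x m = cyl S y m" unfolding cyl_def using xy True by auto
      then have "gm x = gm y" unfolding gm_def condE_def by simp
      then have e: "w x - w y = exp (g x) - exp (g y)" unfolding w_def by simp
      have thj0: "0 \<le> \<theta> j" using nn[OF j1] .
      have thjm: "\<theta> j \<le> \<theta> m" using mono[OF m1 True] .
      have gxy: "cmod (g x - g y) \<le> b2 * \<theta> j ^ j" using gpt[OF j1 x y xy] .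
      have pj: "\<theta> j ^ j \<le> 1" using power_le_one[OF thj0] thjm thm1 by auto
      have "cmod (w x - w y) \<le> cmod (exp (g y)) * (exp (cmod (g x - g y)) * cmod (g x - g y))"
        unfolding e by (rule exp_diff_bound)
      also have "\<dots> \<le> b1 * (E * (b2 * \<theta> j ^ j))"
      proof (intro mult_mono)
        show "exp (cmod (g x - g y)) \<le> E" unfolding E_def
          using gxy pj b2 by (smt (verit) exp_le_cancel_iff mult_left_le)
      qed (use gb1[OF y] gxy b1 E0 in auto)
      also have "\<theta> j ^ j = \<theta> j * \<theta> j ^ (j - 1)" using j1 by (metis power_eq_if not_one_le_zero)
      also have "b1 * (E * (b2 * (\<theta> j * \<theta> j ^ (j - 1)))) \<le> b1 * (E * (b2 * (\<theta> m * \<theta> j ^ (j - 1))))"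
        using thjm thj0 b1 b2 E0 by (intro mult_left_mono mult_right_mono) auto
      also have "\<dots> \<le> 2 * b1 * b2 * E * \<theta> m * \<theta> j ^ (j - 1)"
        using b1 b2 E0 thm0 thj0 by (simp add: algebra_simps)
      finally show ?thesis .
    next
      case False
      have thjm: "\<theta> m \<le> \<theta> j" using mono[OF j1] False by simp
      have thj0: "0 \<le> \<theta> j" using nn[OF j1] .
      have "\<theta> m ^ m = \<theta> m * \<theta> m ^ (m - 1)" using m1 by (metis power_eq_if not_one_le_zero)
      also have "\<dots> \<le> \<theta> m * \<theta> j ^ (j - 1)"
      proof (intro mult_left_mono[OF _ thm0])
        have "\<theta> m ^ (m - 1) \<le> \<theta> m ^ (j - 1)" using False thm0 thm1 by (intro power_decreasing) auto
        also have "\<dots> \<le> \<theta> j ^ (j - 1)" using thm0 thjm by (intro power_mono) auto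
        finally show "\<theta> m ^ (m - 1) \<le> \<theta> j ^ (j - 1)" .
      qed
      finally have pm: "\<theta> m ^ m \<le> \<theta> m * \<theta> j ^ (j - 1)" .
      have "cmod (w x - w y) \<le> cmod (w x) + cmod (w y)" by (rule norm_triangle_ineq4)
      also have "\<dots> \<le> 2 * (b1 * E * (b2 * \<theta> m ^ m))" using wsup0[OF x] wsup0[OF y] by simp
      also have "\<dots> \<le> 2 * (b1 * E * (b2 * (\<theta> m * \<theta> j ^ (j - 1))))"
        using pm b1 b2 E0 by (intro mult_left_mono) auto
      finally show ?thesis by (simp add: algebra_simps)
    qed
    define P0 where "P0 = supnorm S \<phi>"
    have \<phi>V: "\<phi> \<in> Vcl S" using \<phi>B unfolding Bsp_def by simp
    have \<phi>sup: "\<forall>x\<in>S. cmod (\<phi> x) \<le> P0" unfolding P0_def using supnorm_upper[OF \<phi>V] by blast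
    have P00: "P0 \<ge> 0" using \<phi>sup Sne by (meson all_not_in_conv norm_ge_zero order.trans)
    have \<phi>pt: "cmod (\<phi> x - \<phi> y) \<le> C * T * \<theta> (k+1) ^ k"
      if C: "C \<ge> 0" "\<forall>k. var S k \<phi> \<le> C * \<theta> (k+1) ^ k" and x: "x \<in> S" and y: "y \<in> S"
        and xy: "\<forall>j<Suc k. x j = y j" for C k x y
    proof -
      have "cmod (\<phi> x - \<phi> y) \<le> C * \<theta> (Suc k + 1) ^ Suc k" using Bsp_good[OF \<phi>V C(2) x y xy] .
      also have "\<theta> (Suc k + 1) ^ Suc k \<le> \<theta> (k+1) ^ Suc k"
        using mono[of "k+1" "Suc k + 1"] nn[of "Suc k + 1"] by (intro power_mono) auto
      also have "\<theta> (k+1) ^ Suc k = \<theta> (k+1) * \<theta> (k+1) ^ k" by simp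
      also have "\<dots> \<le> T * \<theta> (k+1) ^ k" using leT[of "k+1"] nn[of "k+1"] by (intro mult_right_mono) auto
      finally show ?thesis using C(1) by (simp add: mult_left_mono mult.assoc)
    qed
    define D where "D = Lw S w \<phi>"
    have Dsup: "\<forall>x\<in>S. cmod (D x) \<le> N * W * P0"
      unfolding D_def S_def using Lw_sup[OF wsup[unfolded S_def] \<phi>sup[unfolded S_def] W0 P00] by blast
    have Dgood: "cmod (D x - D y) \<le> K * \<theta> m * (P0 + C) * \<theta> (k+1) ^ k"
      if C: "C \<ge> 0" "\<forall>k. var S k \<phi> \<le> C * \<theta> (k+1) ^ k" and x: "x \<in> S" and y: "y \<in> S"
        and xy: "\<forall>j<k. x j = y j" for C k x y
    proof -
      define Q where "Q = real N * b1 * b2 * E * \<theta> m"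
      have Q0: "Q \<ge> 0" unfolding Q_def using b1 b2 E0 thm0 by auto
      have thk0: "0 \<le> \<theta> (k+1) ^ k" using nn[of "k+1"] by simp
      have KQ: "K * \<theta> m * (P0 + C) * \<theta> (k+1) ^ k = Q * ((T + 2) * (P0 + C)) * \<theta> (k+1) ^ k"
        unfolding K_def Q_def by (simp add: algebra_simps)
      show ?thesis
      proof (cases "k = 0")
        case True
        have "cmod (D x - D y) \<le> cmod (D x) + cmod (D y)" by (rule norm_triangle_ineq4)
        also have "\<dots> \<le> Q * (2 * P0)"
        proof -
          have a: "cmod (D x) \<le> N * W * P0" "cmod (D y) \<le> N * W * P0" using Dsup x y by auto
          have "Q * (2 * P0) = 2 * (N * W * P0)" unfolding Q_def W_def by (simp add: algebra_simps)
          then show ?thesis using a by linarith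
        qed
        also have "\<dots> \<le> Q * ((T + 2) * (P0 + C))"
        proof (rule mult_left_mono[OF _ Q0])
          have "2 * (P0 + C) \<le> (T + 2) * (P0 + C)" using T1 P00 C(1) by (intro mult_right_mono) auto
          then show "2 * P0 \<le> (T + 2) * (P0 + C)" using C(1) distrib_left[of 2 P0 C] by linarith
        qed
        finally show ?thesis unfolding KQ using True by simp
      next
        case False
        then have k1: "k \<ge> 1" by simp
        define Uw where "Uw = 2 * b1 * b2 * E * \<theta> m * \<theta> (k+1) ^ k"
        define Up where "Up = C * T * \<theta> (k+1) ^ k"
        have Uw0: "Uw \<ge> 0" unfolding Uw_def using b1 b2 E0 thm0 thk0 by auto
        have Up0: "Up \<ge> 0" unfolding Up_def using C(1) T1 thk0 by auto
        have "cmod (D x - D y) \<le> N * (W * Up + P0 * Uw)" unfolding D_def S_def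
        proof (rule Lw_var[OF wsup[unfolded S_def] \<phi>sup[unfolded S_def] W0 P00 Uw0 Up0 _ _ k1
                 x[unfolded S_def] y[unfolded S_def] xy])
          show "cmod (w a - w b) \<le> Uw" if "a \<in> SigmaA N A" "b \<in> SigmaA N A" "\<forall>j<Suc k. a j = b j" for a b
            using wvar[of "Suc k" a b] that unfolding Uw_def S_def by simp
          show "cmod (\<phi> a - \<phi> b) \<le> Up" if "a \<in> SigmaA N A" "b \<in> SigmaA N A" "\<forall>j<Suc k. a j = b j" for a b
            using \<phi>pt[OF C _ _ that(3)] that unfolding Up_def S_def by simp
        qed
        also have "N * (W * Up + P0 * Uw) = Q * (T * C + 2 * P0) * \<theta> (k+1) ^ k"
          unfolding Q_def W_def Up_def Uw_def by (simp add: algebra_simps)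
        also have "\<dots> \<le> Q * ((T + 2) * (P0 + C)) * \<theta> (k+1) ^ k"
        proof (intro mult_right_mono[OF _ thk0] mult_left_mono[OF _ Q0])
          have "T * C \<le> (T + 2) * C" "2 * P0 \<le> (T + 2) * P0"
            using C(1) P00 T1 by (intro mult_right_mono; simp)+
          then show "T * C + 2 * P0 \<le> (T + 2) * (P0 + C)" by (simp add: algebra_simps)
        qed
        finally show ?thesis unfolding KQ .
      qed
    qed
    define ew where "ew = (\<lambda>x. exp (g x))"
    define G where "G = Lw S ew \<phi>"
    have ewsup: "\<forall>x\<in>S. cmod (ew x) \<le> b1" unfolding ew_def using gb1 by blast
    have ewvar: "cmod (ew x - ew y) \<le> b1 * E1 * b2 * \<theta> j ^ j"
      if j1: "1 \<le> j" and x: "x \<in> S" and y: "y \<in> S" and xy: "\<forall>i<j. x i = y i" for j x y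
    proof -
      have z1: "cmod (g x - g y) \<le> b2 * \<theta> 1 ^ 1" using gpt[of 1 x y] x y xy j1 by auto
      have zT: "cmod (g x - g y) \<le> b2 * T" using z1 b2 unfolding T_def
        by (smt (verit) max.cobounded2 mult_left_mono power_one_right)
      have "cmod (ew x - ew y) \<le> cmod (exp (g y)) * (exp (cmod (g x - g y)) * cmod (g x - g y))"
        unfolding ew_def by (rule exp_diff_bound)
      also have "\<dots> \<le> b1 * (E1 * (b2 * \<theta> j ^ j))"
        using gb1[OF y] gpt[OF j1 x y xy] zT b1 E0 unfolding E1_def by (intro mult_mono) auto
      finally show ?thesis by (simp add: mult.assoc)
    qed
    have Ggood: "cmod (G x - G y) \<le> K2 * (P0 + C) * \<theta> (k+1) ^ k"
      if C: "C \<ge> 0" "\<forall>k. var S k \<phi> \<le> C * \<theta> (k+1) ^ k" and x: "x \<in> S" and y: "y \<in> S"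
        and xy: "\<forall>j<k. x j = y j" for C k x y
    proof -
      have thk0: "0 \<le> \<theta> (k+1) ^ k" using nn[of "k+1"] by simp
      have b10: "b1 \<ge> 0" using b1 by simp
      have Gsup: "\<forall>x\<in>S. cmod (G x) \<le> N * b1 * P0"
        unfolding G_def S_def using Lw_sup[OF ewsup[unfolded S_def] \<phi>sup[unfolded S_def] b10 P00] by blast
      have A0: "real N * b1 \<ge> 0" using b1 by simp
      have E1b: "1 + E1 * b2 \<ge> 1" using E0 b2 by simp
      show ?thesis
      proof (cases "k = 0")
        case True
        have "cmod (G x - G y) \<le> cmod (G x) + cmod (G y)" by (rule norm_triangle_ineq4)
        also have "\<dots> \<le> (N * b1) * (2 * P0)"
        proof -
          have a: "cmod (G x) \<le> N * b1 * P0" "cmod (G y) \<le> N * b1 * P0" using Gsup x y by auto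
          have "(N * b1) * (2 * P0) = 2 * (N * b1 * P0)" by (simp add: algebra_simps)
          then show ?thesis using a by linarith
        qed
        also have "\<dots> \<le> (N * b1) * ((T + 2) * (1 + E1 * b2) * (P0 + C))"
        proof (rule mult_left_mono[OF _ A0])
          have "2 * (P0 + C) \<le> (T + 2) * (P0 + C)" using T1 P00 C(1) by (intro mult_right_mono) auto
          also have "\<dots> \<le> (T + 2) * ((1 + E1 * b2) * (P0 + C))"
            using T1 P00 C(1) E1b by (intro mult_left_mono) (auto simp: mult_le_cancel_right1)
          finally show "2 * P0 \<le> (T + 2) * (1 + E1 * b2) * (P0 + C)" using C(1) distrib_left[of 2 P0 C] by (simp add: mult.assoc)
        qed
        finally show ?thesis unfolding K2_def using True by (simp add: algebra_simps)
      next
        case False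
        then have k1: "k \<ge> 1" by simp
        define Uw where "Uw = b1 * E1 * b2 * T * \<theta> (k+1) ^ k"
        define Up where "Up = C * T * \<theta> (k+1) ^ k"
        have Uw0: "Uw \<ge> 0" unfolding Uw_def using b1 b2 E0 T1 thk0 by auto
        have Up0: "Up \<ge> 0" unfolding Up_def using C(1) T1 thk0 by auto
        have "cmod (G x - G y) \<le> N * (b1 * Up + P0 * Uw)" unfolding G_def S_def
        proof (rule Lw_var[OF ewsup[unfolded S_def] \<phi>sup[unfolded S_def] b10 P00 Uw0 Up0 _ _ k1
                 x[unfolded S_def] y[unfolded S_def] xy])
          show "cmod (ew a - ew b) \<le> Uw" if ab: "a \<in> SigmaA N A" "b \<in> SigmaA N A" "\<forall>j<Suc k. a j = b j" for a b
          proof -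
            have "cmod (ew a - ew b) \<le> b1 * E1 * b2 * \<theta> (Suc k) ^ Suc k"
              using ewvar[of "Suc k" a b] ab unfolding S_def by simp
            also have "\<theta> (Suc k) ^ Suc k = \<theta> (k+1) * \<theta> (k+1) ^ k" by simp
            also have "b1 * E1 * b2 * (\<theta> (k+1) * \<theta> (k+1) ^ k) \<le> b1 * E1 * b2 * (T * \<theta> (k+1) ^ k)"
              using leT[of "k+1"] thk0 b1 b2 E0 by (intro mult_left_mono mult_right_mono) auto
            finally show ?thesis unfolding Uw_def by (simp add: mult.assoc)
          qed
          show "cmod (\<phi> a - \<phi> b) \<le> Up" if "a \<in> SigmaA N A" "b \<in> SigmaA N A" "\<forall>j<Suc k. a j = b j" for a b
            using \<phi>pt[OF C _ _ that(3)] that unfolding Up_def S_def by simp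
        qed
        also have "N * (b1 * Up + P0 * Uw) = (N * b1) * (T * (C + E1 * b2 * P0)) * \<theta> (k+1) ^ k"
          unfolding Up_def Uw_def by (simp add: algebra_simps)
        also have "\<dots> \<le> (N * b1) * ((T + 2) * (1 + E1 * b2) * (P0 + C)) * \<theta> (k+1) ^ k"
        proof (intro mult_right_mono[OF _ thk0] mult_left_mono[OF _ A0])
          have nn1: "0 \<le> E1 * b2 * C" using E0 b2 C(1) by simp
          have ex: "(1 + E1 * b2) * (P0 + C) = P0 + C + E1 * b2 * P0 + E1 * b2 * C" by (simp add: algebra_simps)
          have h1: "C + E1 * b2 * P0 \<le> (1 + E1 * b2) * (P0 + C)" using nn1 ex P00 by linarith
          have "T * (C + E1 * b2 * P0) \<le> T * ((1 + E1 * b2) * (P0 + C))" using h1 T1 by (intro mult_left_mono) auto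
          also have "\<dots> \<le> (T + 2) * ((1 + E1 * b2) * (P0 + C))"
            using C(1) P00 E1b by (intro mult_right_mono) auto
          finally show "T * (C + E1 * b2 * P0) \<le> (T + 2) * (1 + E1 * b2) * (P0 + C)" by (simp add: mult.assoc)
        qed
        finally show ?thesis unfolding K2_def by (simp add: algebra_simps)
      qed
    qed
    have eqD: "(\<lambda>\<omega>. ruelle S g \<phi> \<omega> - ruelle S gm \<phi> \<omega>) = D"
      unfolding D_def w_def ruelle_Lw Lw_diff ..
    have eqG: "ruelle S gm \<phi> = (\<lambda>\<omega>. G \<omega> - D \<omega>)"
      unfolding G_def D_def ew_def w_def ruelle_Lw Lw_diff by simp
    obtain C\<phi> where C\<phi>: "C\<phi> \<ge> 0" "\<forall>k. var S k \<phi> \<le> C\<phi> * \<theta> (k+1) ^ k"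
      using \<phi>B unfolding Bsp_def by auto
    have thn': "\<forall>k\<ge>1. \<theta> k \<ge> 0" using nn by blast
    have DB: "D \<in> Bsp S \<theta> \<and> (\<forall>k. var S k D \<le> K * \<theta> m * (P0 + C) * \<theta> (k+1) ^ k)"
      if "C \<ge> 0" "\<forall>k. var S k \<phi> \<le> C * \<theta> (k+1) ^ k" for C
      using good_Bsp[OF Sne thlim thn', of "K * \<theta> m * (P0 + C)" D] Dgood[OF that] K0 thm0 P00 that(1)
      by (simp add: mult.assoc)
    have GB: "(\<lambda>\<omega>. G \<omega> - D \<omega>) \<in> Bsp S \<theta>"
    proof -
      define Cst where "Cst = K2 * (P0 + C\<phi>) + K * \<theta> m * (P0 + C\<phi>)"
      have pt: "cmod ((G x - D x) - (G y - D y)) \<le> Cst * \<theta> (k+1) ^ k"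
        if "x \<in> S" "y \<in> S" "\<forall>j<k. x j = y j" for k x y
      proof -
        have "cmod ((G x - D x) - (G y - D y)) \<le> cmod (G x - G y) + cmod (D x - D y)"
          by (metis diff_diff_eq2 diff_add_eq norm_triangle_ineq4 add_diff_eq diff_diff_add)
        then show ?thesis using Ggood[OF C\<phi> that] Dgood[OF C\<phi> that] unfolding Cst_def by (simp add: algebra_simps)
      qed
      have Cst0: "Cst \<ge> 0" unfolding Cst_def using K0 thm0 P00 C\<phi>(1) by simp
      have "(\<lambda>\<omega>. G \<omega> - D \<omega>) \<in> Bsp S \<theta> \<and> (\<forall>k. var S k (\<lambda>\<omega>. G \<omega> - D \<omega>) \<le> Cst * \<theta> (k+1) ^ k)"
        by (rule good_Bsp[OF Sne thlim thn' Cst0]) (rule pt)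
      then show ?thesis by simp
    qed
    define SD where "SD = {C. C \<ge> 0 \<and> (\<forall>k. var S k D \<le> C * \<theta> (k+1) ^ k)}"
    define S\<phi> where "S\<phi> = {C. C \<ge> 0 \<and> (\<forall>k. var S k \<phi> \<le> C * \<theta> (k+1) ^ k)}"
    have S\<phi>ne: "C\<phi> \<in> S\<phi>" unfolding S\<phi>_def using C\<phi> by simp
    have I\<phi>0: "Inf S\<phi> \<ge> 0" by (rule cInf_greatest) (use S\<phi>ne S\<phi>_def in auto)
    have ISD: "Inf SD \<le> K * \<theta> m * (P0 + C)" if "C \<in> S\<phi>" for C
    proof (rule cInf_lower)
      show "K * \<theta> m * (P0 + C) \<in> SD" unfolding SD_def using DB[of C] that K0 thm0 P00
        unfolding S\<phi>_def by simp
      show "bdd_below SD" unfolding SD_def by (rule bdd_belowI[of _ 0]) auto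
    qed
    have ISD2: "Inf SD \<le> K * \<theta> m * (P0 + Inf S\<phi>)"
    proof (cases "K * \<theta> m = 0")
      case True then show ?thesis using ISD[OF S\<phi>ne] by (metis mult_zero_left)
    next
      case False
      then have Kp: "K * \<theta> m > 0" using K0 thm0 by (simp add: less_le)
      have "Inf SD / (K * \<theta> m) - P0 \<le> Inf S\<phi>"
      proof (rule cInf_greatest)
        show "S\<phi> \<noteq> {}" using S\<phi>ne by auto
        fix C assume "C \<in> S\<phi>"
        then have "Inf SD \<le> K * \<theta> m * (P0 + C)" by (rule ISD)
        then show "Inf SD / (K * \<theta> m) - P0 \<le> C" using Kp by (simp add: divide_le_eq algebra_simps)
      qed
      then show ?thesis using Kp by (simp add: divide_le_eq algebra_simps)
    qed
    have supD: "supnorm S D \<le> K1 * \<theta> m * P0"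
      by (rule supnorm_least[OF Sne]) (use Dsup in \<open>simp add: K1_def W_def algebra_simps\<close>)
    have "Bnorm S \<theta> D = supnorm S D + Inf SD" unfolding Bnorm_def SD_def ..
    also have "\<dots> \<le> K1 * \<theta> m * P0 + K * \<theta> m * (P0 + Inf S\<phi>)" using supD ISD2 by simp
    also have "\<dots> \<le> (K + K1) * (\<theta> m * (P0 + Inf S\<phi>))"
      using K0 thm0 P00 I\<phi>0 by (simp add: algebra_simps mult_left_mono)
    also have "\<dots> \<le> C3 * (\<theta> m * (P0 + Inf S\<phi>))"
      unfolding C3_def using thm0 P00 I\<phi>0 by (intro mult_right_mono) auto
    also have "\<dots> = C3 * \<theta> m * Bnorm S \<theta> \<phi>" unfolding Bnorm_def P0_def S\<phi>_def by simp
    finally have nrm: "Bnorm S \<theta> D \<le> C3 * \<theta> m * Bnorm S \<theta> \<phi>" .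
    show ?thesis unfolding gm_def[symmetric] eqD unfolding eqG using nrm GB DB[OF C\<phi>] by simp
  qed
  show ?thesis unfolding S_def[symmetric] using main C3pos by blast
qed

end
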